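(* Let $N=(P_N,T_N,F_N,I_N,O_N)$ and $M=(P_M,T_M,F_M,I_M,O_M)$ be pWF nets with disjoint node sets, both sub-sound. Then for every place $p\in P_N$, the net $N\otimes_p M$ is sub-sound.
   Context: Petri nets and markings. A Petri net is a triple $(P,T,F)$ with $P$ a finite set of places, $T$ a finite set of transitions, $P\cap T=\emptyset$, and $F\subseteq (P\times T)\cup(T\times P)$. For a node $x$, $\bullet x=\{y\mid (y,x)\in F\}$, $x\bullet=\{y\mid (x,y)\in F\}$. A marking is a multiset over $P$ (a function $P\to\mathbb N$); sets of places are identified with bags of multiplicity one, $+,-,\le$ are pointwise, and $k.m$ is the sum of $k$ copies of $m$. Transition $t$ is enabled at $m$ iff $\bullet t\le m$, firing gives $m-\bullet t+t\bullet$, and $m\xrightarrow{*}m'$ denotes reachability by a finite (possibly empty) firing sequence. A pWF net is $(P,T,F,I,O)$ with $(P,T,F)$ a Petri net, $I,O\subseteq P$ non-empty (input/output places), every node reachable by a directed path from some node of $I$, and some node of $O$ reachable from every node; input places may have incoming edges and output places outgoing edges. Sub-soundness. A pWF net is sub-sound if for all integers $k\ge k'\ge 0$ and every marking $m'$: if $k.I\xrightarrow{*}m'+k'.O$ then $m'\xrightarrow{*}(k-k').O$. Place substitution. For WF nets $N=(P,T,F,I,O)$ and a pWF net $M=(P',T',F',I',O')$ with disjoint node sets and $p\in P$, $N\otimes_p M$ is obtained from $N$ by deleting $p$ and all edges incident to $p$, adding all nodes and edges of $M$, adding an edge $(t,p')$ for each $t\in\bullet_N p$ and $p'\in I'$,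 and an edge $(p',t)$ for each $p'\in O'$ and $t\in p\bullet_N$; its input set is $(I\setminus\{p\})\cup I'$ if $p\in I$ and $I$ otherwise, and its output set is $(O\setminus\{p\})\cup O'$ if $p\in O$ and $O$ otherwise. *)

theory Defs
  imports Main "HOL-Library.Multiset"
begin

text \<open>Petri nets with input and output places (pWF candidates).
  Places and transitions live in a common node type 'a, so that
  disjointness of node sets of two nets can be stated.\<close>

record 'a pnet =
  places :: "'a set"
  trans  :: "'a set"
  flow   :: "('a \<times> 'a) set"
  inp    :: "'a set"
  outp   :: "'a set"

definition nodes :: "'a pnet \<Rightarrow> 'a set" where
  "nodes N = places N \<union> trans N"

definition preset :: "'a pnet \<Rightarrow> 'a \<Rightarrow> 'a set" where
  "preset N x = {y. (y, x) \<in> flow N}"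

definition postset :: "'a pnet \<Rightarrow> 'a \<Rightarrow> 'a set" where
  "postset N x = {y. (x, y) \<in> flow N}"

definition petri_net :: "'a pnet \<Rightarrow> bool" where
  "petri_net N \<longleftrightarrow> finite (places N) \<and> finite (trans N) \<and>
     places N \<inter> trans N = {} \<and>
     flow N \<subseteq> (places N \<times> trans N) \<union> (trans N \<times> places N)"

definition pWF_net :: "'a pnet \<Rightarrow> bool" where
  "pWF_net N \<longleftrightarrow> petri_net N \<and>
     inp N \<subseteq> places N \<and> outp N \<subseteq> places N \<and>
     inp N \<noteq> {} \<and> outp N \<noteq> {} \<and>
     (\<forall>x \<in> nodes N. \<exists>i \<in> inp N. (i, x) \<in> (flow N)\<^sup>*) \<and>
     (\<forall>x \<in> nodes N. \<exists>q \<in> outp N. (x, q) \<in> (flow N)\<^sup>*)"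

text \<open>Markings are multisets of places; a set is identified with the
  multiset of multiplicity one (mset_set).\<close>

definition marking :: "'a pnet \<Rightarrow> 'a multiset \<Rightarrow> bool" where
  "marking N m \<longleftrightarrow> set_mset m \<subseteq> places N"

definition fire :: "'a pnet \<Rightarrow> 'a multiset \<Rightarrow> 'a multiset \<Rightarrow> bool" where
  "fire N m m' \<longleftrightarrow> (\<exists>t \<in> trans N. mset_set (preset N t) \<subseteq># m \<and>
       m' = m - mset_set (preset N t) + mset_set (postset N t))"

definition reach :: "'a pnet \<Rightarrow> 'a multiset \<Rightarrow> 'a multiset \<Rightarrow> bool" where
  "reach N = (fire N)\<^sup>*\<^sup>*"

definition sub_sound :: "'a pnet \<Rightarrow> bool" where
  "sub_sound N \<longleftrightarrow> (\<forall>k k' :: nat. \<forall>m'. k \<ge> k' \<and> marking N m' \<longrightarrow>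
     reach N (repeat_mset k (mset_set (inp N))) (m' + repeat_mset k' (mset_set (outp N))) \<longrightarrow>
     reach N m' (repeat_mset (k - k') (mset_set (outp N))))"

definition place_subst :: "'a pnet \<Rightarrow> 'a \<Rightarrow> 'a pnet \<Rightarrow> 'a pnet" where
  "place_subst N p M =
    \<lparr> places = (places N - {p}) \<union> places M,
      trans = trans N \<union> trans M,
      flow = {(x, y). (x, y) \<in> flow N \<and> x \<noteq> p \<and> y \<noteq> p} \<union> flow M
             \<union> {(t, q). t \<in> preset N p \<and> q \<in> inp M}
             \<union> {(q, t). q \<in> outp M \<and> t \<in> postset N p},
      inp = (if p \<in> inp N then (inp N - {p}) \<union> inp M else inp N),
      outp = (if p \<in> outp N then (outp N - {p}) \<union> outp M else outp N) \<rparr>"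

end

theory Submission
  imports Defs
begin

lemma fire_frame: "fire X u v \<Longrightarrow> fire X (u + w) (v + w)"
proof -
  assume "fire X u v"
  then obtain t where t: "t \<in> trans X" "mset_set (preset X t) \<subseteq># u"
    "v = u - mset_set (preset X t) + mset_set (postset X t)" unfolding fire_def by blast
  have "mset_set (preset X t) \<subseteq># u + w" using t(2) by (simp add: subset_mset.add_increasing2)
  moreover have "u + w - mset_set (preset X t) + mset_set (postset X t) = v + w"
  proof (rule multiset_eqI)
    fix a
    have "count (mset_set (preset X t)) a \<le> count u a" using t(2) by (simp add: subseteq_mset_def)
    then show "count (u + w - mset_set (preset X t) + mset_set (postset X t)) a = count (v + w) a"
      using t(3) by simp
  qed
  ultimately show ?thesis using t(1) unfolding fire_def by metis
qed

lemma reach_frame: "reach X u v \<Longrightarrow> reach X (u + w) (v + w)"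
  unfolding reach_def
proof (induction rule: rtranclp_induct)
  case base then show ?case by simp
next
  case (step y z) then show ?case using fire_frame[of X y z w]
    by (metis rtranclp.rtrancl_into_rtrancl)
qed

lemma in_repeat: "x \<in># repeat_mset n A \<Longrightarrow> x \<in># A"
  by (metis count_repeat_mset count_eq_zero_iff mult_0_right)

lemma in_mset_setD: "x \<in># mset_set A \<Longrightarrow> x \<in> A"
  by (cases "finite A") auto

lemma reach_trans: "reach X u v \<Longrightarrow> reach X v w \<Longrightarrow> reach X u w"
  unfolding reach_def by simp

locale sctx =
  fixes N M :: "'a pnet" and p :: 'a
  assumes wN: "pWF_net N" and wM: "pWF_net M" and dis: "nodes N \<inter> nodes M = {}"
    and sM: "sub_sound M" and pP: "p \<in> places N"
begin

abbreviation "C \<equiv> place_subst N p M"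

lemma finPN: "finite (places N)" and finPM: "finite (places M)"
  and dN: "places N \<inter> trans N = {}" and dM: "places M \<inter> trans M = {}"
  and fN: "flow N \<subseteq> (places N \<times> trans N) \<union> (trans N \<times> places N)"
  and fM: "flow M \<subseteq> (places M \<times> trans M) \<union> (trans M \<times> places M)"
  and iM: "inp M \<subseteq> places M" and oM: "outp M \<subseteq> places M" and iN: "inp N \<subseteq> places N"
  and oN: "outp N \<subseteq> places N" and oMne: "outp M \<noteq> {}"
  using wN wM unfolding pWF_net_def petri_net_def by auto

lemma disPP: "places N \<inter> places M = {}" and disTT: "trans N \<inter> trans M = {}"
  and disPT: "places N \<inter> trans M = {}" and disTP: "trans N \<inter> places M = {}"
  using dis unfolding nodes_def by auto

lemma preN_sub: "preset N t \<subseteq> places N" if "t \<in> trans N"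
  using fN dN that unfolding preset_def by auto
lemma postN_sub: "postset N t \<subseteq> places N" if "t \<in> trans N"
  using fN dN that unfolding postset_def by auto
lemma preM_sub: "preset M t \<subseteq> places M" if "t \<in> trans M"
  using fM dM that unfolding preset_def by auto
lemma postM_sub: "postset M t \<subseteq> places M" if "t \<in> trans M"
  using fM dM that unfolding postset_def by auto

lemma transC: "trans C = trans N \<union> trans M" unfolding place_subst_def by simp

lemma preC_N: "t \<in> trans N \<Longrightarrow> preset C t = (preset N t - {p}) \<union> (if p \<in> preset N t then outp M else {})"
  using fM disTP disTT iM pP dN unfolding place_subst_def preset_def postset_def by auto
lemma postC_N: "t \<in> trans N \<Longrightarrow> postset C t = (postset N t - {p}) \<union> (if p \<in> postset N t then inp M else {})"
  using fM disTP disTT oM pP dN unfolding place_subst_def preset_def postset_def by auto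
lemma preC_M: "t \<in> trans M \<Longrightarrow> preset C t = preset M t"
  using fN disPT disTT iM dM unfolding place_subst_def preset_def postset_def by auto
lemma postC_M: "t \<in> trans M \<Longrightarrow> postset C t = postset M t"
  using fN disPT disTT oM dM unfolding place_subst_def preset_def postset_def by auto

lemma postM_ne: "t \<in> trans M \<Longrightarrow> mset_set (postset M t) \<noteq> {#}"
proof -
  assume t: "t \<in> trans M"
  then have "t \<in> nodes M" unfolding nodes_def by simp
  then obtain q where q: "q \<in> outp M" "(t, q) \<in> (flow M)\<^sup>*" using wM unfolding pWF_net_def by blast
  have "t \<noteq> q" using q(1) oM dM t by auto
  then obtain y where "(t, y) \<in> flow M" using q(2) by (meson converse_rtranclE)
  then have "y \<in> postset M t" unfolding postset_def by simp
  moreover have "finite (postset M t)" using postM_sub[OF t] finPM finite_subset by blast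
  ultimately show ?thesis by (simp add: mset_set_empty_iff) blast
qed

lemma reachM_ne: "reach M u v \<Longrightarrow> u \<noteq> {#} \<Longrightarrow> v \<noteq> {#}"
  unfolding reach_def
proof (induction rule: rtranclp_induct)
  case base then show ?case by simp
next
  case (step y z)
  then obtain t where "t \<in> trans M" "z = y - mset_set (preset M t) + mset_set (postset M t)"
    unfolding fire_def by blast
  then show ?case using postM_ne by simp
qed

lemma boundM: "marking M x \<Longrightarrow> reach M (repeat_mset j (mset_set (inp M))) (x + repeat_mset L (mset_set (outp M))) \<Longrightarrow> L \<le> j"
proof (rule ccontr)
  assume mx: "marking M x" and r: "reach M (repeat_mset j (mset_set (inp M))) (x + repeat_mset L (mset_set (outp M)))"
    and nl: "\<not> L \<le> j"
  define m' where "m' = x + repeat_mset (L - j) (mset_set (outp M))"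
  have "x + repeat_mset L (mset_set (outp M)) = m' + repeat_mset j (mset_set (outp M))"
    using nl unfolding m'_def by (simp add: repeat_mset_distrib[symmetric] add.assoc)
  moreover have "marking M m'" using mx oM finPM finite_subset unfolding m'_def marking_def
    by (auto dest!: in_repeat in_mset_setD)
  ultimately have "reach M m' (repeat_mset (j - j) (mset_set (outp M)))"
    using sM r unfolding sub_sound_def by (metis order_refl)
  moreover have "m' \<noteq> {#}" using nl oMne oM finPM finite_subset unfolding m'_def
    by (auto simp: repeat_mset_eq_empty_iff mset_set_empty_iff)
  ultimately show False using reachM_ne by fastforce
qed

lemma IO: "reach M (mset_set (inp M)) (mset_set (outp M))"
proof -
  have "marking M (mset_set (inp M))" using iM unfolding marking_def by (auto dest!: in_mset_setD)
  moreover have "reach M (repeat_mset 1 (mset_set (inp M))) (mset_set (inp M) + repeat_mset 0 (mset_set (outp M)))"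
    unfolding reach_def by simp
  ultimately have "reach M (mset_set (inp M)) (repeat_mset (1 - 0) (mset_set (outp M)))"
    using sM unfolding sub_sound_def by (metis repeat_mset_Suc repeat_mset_0 add_0_right zero_le_one)
  then show ?thesis by simp
qed

lemma fireM_C: "fire M u v \<Longrightarrow> fire C u v"
proof -
  assume "fire M u v"
  then obtain t where "t \<in> trans M" "mset_set (preset M t) \<subseteq># u"
    "v = u - mset_set (preset M t) + mset_set (postset M t)" unfolding fire_def by blast
  then show ?thesis unfolding fire_def using preC_M postC_M transC by (metis UnI2)
qed

lemma reachM_C: "reach M u v \<Longrightarrow> reach C u v"
  unfolding reach_def by (induction rule: rtranclp_induct) (auto intro: rtranclp.rtrancl_into_rtrancl fireM_C)

lemma finPre: "finite (preset N t)" if "t \<in> trans N" using preN_sub[OF that] finPN finite_subset by blast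
lemma finPost: "finite (postset N t)" if "t \<in> trans N" using postN_sub[OF that] finPN finite_subset by blast
lemma finI: "finite (inp M)" and finO: "finite (outp M)" using iM oM finPM finite_subset by blast+

lemma preN_split: "t \<in> trans N \<Longrightarrow> mset_set (preset N t) = mset_set (preset N t - {p}) + (if p \<in> preset N t then {#p#} else {#})"
  using finPre by (auto simp: mset_set.remove)
lemma postN_split: "t \<in> trans N \<Longrightarrow> mset_set (postset N t) = mset_set (postset N t - {p}) + (if p \<in> postset N t then {#p#} else {#})"
  using finPost by (auto simp: mset_set.remove)
lemma preC_split: "t \<in> trans N \<Longrightarrow> mset_set (preset C t) = mset_set (preset N t - {p}) + (if p \<in> preset N t then mset_set (outp M) else {#})"
proof -
  assume t: "t \<in> trans N"
  have "(preset N t - {p}) \<inter> outp M = {}" using preN_sub[OF t] oM disPP by blast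
  then show ?thesis using preC_N[OF t] finPre[OF t] finO mset_set_Union[of "preset N t - {p}" "outp M"] by auto
qed
lemma postC_split: "t \<in> trans N \<Longrightarrow> mset_set (postset C t) = mset_set (postset N t - {p}) + (if p \<in> postset N t then mset_set (inp M) else {#})"
proof -
  assume t: "t \<in> trans N"
  have "(postset N t - {p}) \<inter> inp M = {}" using postN_sub[OF t] iM disPP by blast
  then show ?thesis using postC_N[OF t] finPost[OF t] finI mset_set_Union[of "postset N t - {p}" "inp M"] by auto
qed

definition lift :: "'a multiset \<Rightarrow> 'a multiset" where
  "lift x = filter_mset (\<lambda>q. q \<noteq> p) x + repeat_mset (count x p) (mset_set (outp M))"

lemma lift_plus: "lift (x + y) = lift x + lift y"
  unfolding lift_def by (simp add: repeat_mset_distrib)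

lemma lift_nop: "p \<notin># x \<Longrightarrow> lift x = x"
  unfolding lift_def by (simp add: count_eq_zero_iff[symmetric] filter_mset_eq_conv) (metis count_eq_zero_iff)

lemma lift_p: "lift (replicate_mset c p) = repeat_mset c (mset_set (outp M))"
  unfolding lift_def by (simp add: filter_mset_eq_conv)

lemma lift_single: "lift (if b then {#p#} else {#}) = (if b then mset_set (outp M) else {#})"
  using lift_p[of 1] lift_p[of 0] by auto

lemma nop_S: "p \<notin># mset_set (S - {p})" by (auto dest: in_mset_setD)

lemma fireN_lift: "fire N x y \<Longrightarrow> reach C (lift x) (lift y)"
proof -
  assume "fire N x y"
  then obtain t where t: "t \<in> trans N" "mset_set (preset N t) \<subseteq># x"
    "y = x - mset_set (preset N t) + mset_set (postset N t)" unfolding fire_def by blast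
  define A where "A = mset_set (preset N t - {p})"
  define B where "B = mset_set (postset N t - {p})"
  define a where "a = (p \<in> preset N t)"
  define b where "b = (p \<in> postset N t)"
  define r where "r = x - mset_set (preset N t)"
  have xr: "x = r + mset_set (preset N t)" using t(2) unfolding r_def by simp
  have lpre: "lift (mset_set (preset N t)) = mset_set (preset C t)"
    using preN_split[OF t(1)] preC_split[OF t(1)] lift_plus lift_nop[OF nop_S] lift_single by simp
  have lpost: "lift (mset_set (postset N t)) = B + (if b then mset_set (outp M) else {#})"
    using postN_split[OF t(1)] lift_plus lift_nop[OF nop_S] lift_single unfolding B_def b_def by simp
  have lx: "lift x = lift r + mset_set (preset C t)" using xr lift_plus lpre by simp
  have "fire C (lift x) (lift r + mset_set (postset C t))"
    unfolding fire_def using t(1) transC lx by (intro bexI[of _ t]) auto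
  moreover have "mset_set (postset C t) = B + (if b then mset_set (inp M) else {#})"
    using postC_split[OF t(1)] unfolding B_def b_def by simp
  moreover have "reach C (lift r + B + (if b then mset_set (inp M) else {#})) (lift r + B + (if b then mset_set (outp M) else {#}))"
    using reachM_C[OF reach_frame[OF IO, of "lift r + B"]] by (cases b) (auto simp: reach_def add.commute)
  moreover have "lift y = lift r + B + (if b then mset_set (outp M) else {#})"
    using t(3) lift_plus lpost unfolding r_def by (simp add: add.assoc)
  ultimately show ?thesis unfolding reach_def by (simp add: add.assoc)
qed

lemma reachN_lift: "reach N x y \<Longrightarrow> reach C (lift x) (lift y)"
  unfolding reach_def
proof (induction rule: rtranclp_induct)
  case base then show ?case by simp
next
  case (step y z) then show ?case using fireN_lift[of y z] unfolding reach_def by simp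
qed

definition prN :: "'a multiset \<Rightarrow> 'a multiset" where "prN x = filter_mset (\<lambda>q. q \<notin> places M) x"
definition prM :: "'a multiset \<Rightarrow> 'a multiset" where "prM x = filter_mset (\<lambda>q. q \<in> places M) x"

lemma prN_plus: "prN (x + y) = prN x + prN y" and prN_diff: "prN (x - y) = prN x - prN y"
  and prM_plus: "prM (x + y) = prM x + prM y" and prM_diff: "prM (x - y) = prM x - prM y"
  unfolding prN_def prM_def by simp_all

lemma filter_repeat: "filter_mset P (repeat_mset k A) = repeat_mset k (filter_mset P A)"
  by (auto simp: multiset_eq_iff)

lemma prN_A: "prN (mset_set (S - {p})) = mset_set (S - {p})" if "S \<subseteq> places N"
  unfolding prN_def using that disPP by (cases "finite S") (auto intro!: arg_cong[where f=mset_set])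
lemma prM_A: "prM (mset_set (S - {p})) = {#}" if "S \<subseteq> places N"
  unfolding prM_def using that disPP by (cases "finite S") (auto simp: filter_mset_eq_conv dest!: in_mset_setD)
lemma prN_M: "prN (mset_set S) = {#}" if "S \<subseteq> places M"
  unfolding prN_def using that by (auto simp: filter_mset_eq_conv dest!: in_mset_setD)
lemma prM_M: "prM (mset_set S) = mset_set S" if "S \<subseteq> places M"
  unfolding prM_def using that by (auto simp: filter_mset_eq_conv dest!: in_mset_setD)

lemma stepN:
  assumes t: "t \<in> trans N" and le: "mset_set (preset C t) \<subseteq># m"
    and IHN: "reach N (repeat_mset k (mset_set (inp N))) (prN m + replicate_mset (j - l) p)"
    and IHM: "reach M (repeat_mset j (mset_set (inp M))) (prM m + repeat_mset l (mset_set (outp M)))"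
    and lj: "l \<le> j"
  defines "m' \<equiv> m - mset_set (preset C t) + mset_set (postset C t)"
  shows "\<exists>j l. l \<le> j \<and> reach N (repeat_mset k (mset_set (inp N))) (prN m' + replicate_mset (j - l) p)
     \<and> reach M (repeat_mset j (mset_set (inp M))) (prM m' + repeat_mset l (mset_set (outp M)))"
proof -
  define A where "A = mset_set (preset N t - {p})"
  define B where "B = mset_set (postset N t - {p})"
  define a :: nat where "a = (if p \<in> preset N t then 1 else 0)"
  define b :: nat where "b = (if p \<in> postset N t then 1 else 0)"
  have pC: "mset_set (preset C t) = A + repeat_mset a (mset_set (outp M))"
    using preC_split[OF t] unfolding A_def a_def by simp
  have qC: "mset_set (postset C t) = B + repeat_mset b (mset_set (inp M))"
    using postC_split[OF t] unfolding B_def b_def by simp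
  have pN: "mset_set (preset N t) = A + replicate_mset a p"
    using preN_split[OF t] unfolding A_def a_def by simp
  have qN: "mset_set (postset N t) = B + replicate_mset b p"
    using postN_split[OF t] unfolding B_def b_def by simp
  have nA: "prN A = A" "prM A = {#}" using prN_A prM_A preN_sub[OF t] unfolding A_def by auto
  have nB: "prN B = B" "prM B = {#}" using prN_A prM_A postN_sub[OF t] unfolding B_def by auto
  have nO: "prN (repeat_mset c (mset_set (outp M))) = {#}" "prM (repeat_mset c (mset_set (outp M))) = repeat_mset c (mset_set (outp M))" for c
    by (simp_all only: prN_def prM_def filter_repeat prN_M[OF oM, unfolded prN_def] prM_M[OF oM, unfolded prM_def] repeat_mset_empty)
  have nI: "prN (repeat_mset c (mset_set (inp M))) = {#}" "prM (repeat_mset c (mset_set (inp M))) = repeat_mset c (mset_set (inp M))" for c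
    by (simp_all only: prN_def prM_def filter_repeat prN_M[OF iM, unfolded prN_def] prM_M[OF iM, unfolded prM_def] repeat_mset_empty)
  have Ap: "count A p = 0" "count B p = 0" unfolding A_def B_def using nop_S by (simp_all add: count_eq_zero_iff)
  have Ale: "A \<subseteq># prN m" using multiset_filter_mono[OF le, of "\<lambda>q. q \<notin> places M"] nA nO
    unfolding pC prN_def by simp
  have Ole: "repeat_mset a (mset_set (outp M)) \<subseteq># prM m"
    using multiset_filter_mono[OF le, of "\<lambda>q. q \<in> places M"] nA nO unfolding pC prM_def by simp
  have prNm': "prN m' = prN m - A + B" unfolding m'_def pC qC by (simp add: prN_plus prN_diff nA nB nI nO)
  have prMm': "prM m' = prM m - repeat_mset a (mset_set (outp M)) + repeat_mset b (mset_set (inp M))"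
    unfolding m'_def pC qC by (simp add: prM_plus prM_diff nA nB nI nO)
  have alj: "l + a \<le> j"
  proof -
    define x where "x = prM m - repeat_mset a (mset_set (outp M))"
    have "prM m + repeat_mset l (mset_set (outp M)) = x + repeat_mset (l + a) (mset_set (outp M))"
    proof (rule multiset_eqI)
      fix q
      have "a * count (mset_set (outp M)) q \<le> count (prM m) q" using Ole by (metis count_repeat_mset mset_subset_eq_count)
      then show "count (prM m + repeat_mset l (mset_set (outp M))) q = count (x + repeat_mset (l + a) (mset_set (outp M))) q"
        unfolding x_def by (simp add: add_mult_distrib)
    qed
    moreover have "marking M x" unfolding marking_def x_def prM_def by (auto dest: in_diffD)
    ultimately show ?thesis using boundM IHM by metis
  qed
  have "fire N (prN m + replicate_mset (j - l) p) (prN m' + replicate_mset (j + b - (l + a)) p)"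
    unfolding fire_def
  proof (intro bexI[of _ t] conjI)
    show "mset_set (preset N t) \<subseteq># prN m + replicate_mset (j - l) p"
      unfolding pN using Ale alj Ap by (auto simp: subseteq_mset_def)
    show "prN m' + replicate_mset (j + b - (l + a)) p =
      prN m + replicate_mset (j - l) p - mset_set (preset N t) + mset_set (postset N t)"
      unfolding pN qN prNm' using Ale alj Ap
      by (auto simp: multiset_eq_iff subseteq_mset_def) 
  qed (rule t)
  then have rN: "reach N (repeat_mset k (mset_set (inp N))) (prN m' + replicate_mset (j + b - (l + a)) p)"
    using IHN unfolding reach_def by simp
  have "reach M (repeat_mset j (mset_set (inp M)) + repeat_mset b (mset_set (inp M)))
     (prM m + repeat_mset l (mset_set (outp M)) + repeat_mset b (mset_set (inp M)))"
    using reach_frame[OF IHM] by simp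
  moreover have "prM m + repeat_mset l (mset_set (outp M)) + repeat_mset b (mset_set (inp M))
     = prM m' + repeat_mset (l + a) (mset_set (outp M))"
  proof (rule multiset_eqI)
    fix q
    have "a * count (mset_set (outp M)) q \<le> count (prM m) q" using Ole by (metis count_repeat_mset mset_subset_eq_count)
    then show "count (prM m + repeat_mset l (mset_set (outp M)) + repeat_mset b (mset_set (inp M))) q = count (prM m' + repeat_mset (l + a) (mset_set (outp M))) q"
      unfolding prMm' by (simp add: add_mult_distrib)
  qed
  ultimately have rM: "reach M (repeat_mset (j + b) (mset_set (inp M))) (prM m' + repeat_mset (l + a) (mset_set (outp M)))"
    by (simp add: repeat_mset_distrib)
  have "l + a \<le> j + b" using alj by simp
  then show ?thesis using rN rM by blast
qed

lemma stepM:
  assumes t: "t \<in> trans M" and le: "mset_set (preset C t) \<subseteq># m"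
    and IHN: "reach N (repeat_mset k (mset_set (inp N))) (prN m + replicate_mset (j - l) p)"
    and IHM: "reach M (repeat_mset j (mset_set (inp M))) (prM m + repeat_mset l (mset_set (outp M)))"
    and lj: "l \<le> j"
  defines "m' \<equiv> m - mset_set (preset C t) + mset_set (postset C t)"
  shows "\<exists>j l. l \<le> j \<and> reach N (repeat_mset k (mset_set (inp N))) (prN m' + replicate_mset (j - l) p)
     \<and> reach M (repeat_mset j (mset_set (inp M))) (prM m' + repeat_mset l (mset_set (outp M)))"
proof -
  have e: "mset_set (preset C t) = mset_set (preset M t)" "mset_set (postset C t) = mset_set (postset M t)"
    using preC_M[OF t] postC_M[OF t] by simp_all
  have n: "prN (mset_set (preset M t)) = {#}" "prN (mset_set (postset M t)) = {#}"
    "prM (mset_set (preset M t)) = mset_set (preset M t)" "prM (mset_set (postset M t)) = mset_set (postset M t)"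
    using prN_M prM_M preM_sub[OF t] postM_sub[OF t] by auto
  have "prN m' = prN m" unfolding m'_def e by (simp add: prN_plus prN_diff n)
  moreover have pm: "prM m' = prM m - mset_set (preset M t) + mset_set (postset M t)"
    unfolding m'_def e by (simp add: prM_plus prM_diff n)
  moreover have "mset_set (preset M t) \<subseteq># prM m"
    using multiset_filter_mono[OF le, of "\<lambda>q. q \<in> places M"] n unfolding e prM_def by simp
  then have "fire M (prM m) (prM m')" unfolding fire_def pm using t by blast
  then have "fire M (prM m + repeat_mset l (mset_set (outp M))) (prM m' + repeat_mset l (mset_set (outp M)))"
    by (rule fire_frame)
  then have "reach M (repeat_mset j (mset_set (inp M))) (prM m' + repeat_mset l (mset_set (outp M)))"
    using IHM unfolding reach_def by simp
  ultimately show ?thesis using IHN lj by metis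
qed

lemma splitp: "finite S \<Longrightarrow> mset_set S = mset_set (S - {p}) + (if p \<in> S then {#p#} else {#})"
  by (auto simp: mset_set.remove)

lemma finIN: "finite (inp N)" and finON: "finite (outp N)" using iN oN finPN finite_subset by blast+

lemma inv: "reach C (repeat_mset k (mset_set (inp C))) m \<Longrightarrow> \<exists>j l. l \<le> j \<and>
   reach N (repeat_mset k (mset_set (inp N))) (prN m + replicate_mset (j - l) p)
     \<and> reach M (repeat_mset j (mset_set (inp M))) (prM m + repeat_mset l (mset_set (outp M)))"
  unfolding reach_def[of C]
proof (induction rule: rtranclp_induct)
  case base
  define j where "j = (if p \<in> inp N then k else 0)"
  have d: "(inp N - {p}) \<inter> inp M = {}" using iN iM disPP by blast
  have iC: "mset_set (inp C) = mset_set (inp N - {p}) + (if p \<in> inp N then mset_set (inp M) else {#})"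
    using mset_set_Union[OF _ finI d] finIN unfolding place_subst_def by auto
  have a1: "prN (mset_set (inp C)) = mset_set (inp N - {p})" "prM (mset_set (inp C)) = (if p \<in> inp N then mset_set (inp M) else {#})"
    unfolding iC using prN_A[OF iN] prM_A[OF iN] prN_M[OF iM] prM_M[OF iM] by (auto simp: prN_plus prM_plus prN_def prM_def)
  have a2: "prN (repeat_mset k (mset_set (inp C))) = repeat_mset k (prN (mset_set (inp C)))"
    "prM (repeat_mset k (mset_set (inp C))) = repeat_mset k (prM (mset_set (inp C)))"
    unfolding prN_def prM_def by (simp_all only: filter_repeat)
  have "repeat_mset k (mset_set (inp N)) = prN (repeat_mset k (mset_set (inp C))) + replicate_mset (j - 0) p"
    unfolding a2 a1 j_def by (subst splitp[OF finIN]) auto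
  moreover have "repeat_mset j (mset_set (inp M)) = prM (repeat_mset k (mset_set (inp C))) + repeat_mset 0 (mset_set (outp M))"
    unfolding a2 a1 j_def by auto
  ultimately show ?case unfolding reach_def by (metis rtranclp.rtrancl_refl le0)
next
  case (step y z)
  then obtain j l where IH: "l \<le> j" "reach N (repeat_mset k (mset_set (inp N))) (prN y + replicate_mset (j - l) p)"
     "reach M (repeat_mset j (mset_set (inp M))) (prM y + repeat_mset l (mset_set (outp M)))" by blast
  from step(2) obtain t where t: "t \<in> trans C" "mset_set (preset C t) \<subseteq># y"
    "z = y - mset_set (preset C t) + mset_set (postset C t)" unfolding fire_def by blast
  show ?case
  proof (cases "t \<in> trans N")
    case True then show ?thesis using stepN[OF True t(2) IH(2,3,1)] t(3) by simp
  next
    case False then have "t \<in> trans M" using t(1) transC by auto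
    then show ?thesis using stepM[OF _ t(2) IH(2,3,1)] t(3) by simp
  qed
qed

lemma lift_repeat: "lift (repeat_mset n x) = repeat_mset n (lift x)"
  by (induction n) (auto simp: lift_plus lift_def)

lemma main:
  assumes sN: "sub_sound N"
  shows "sub_sound C"
  unfolding sub_sound_def
proof (intro allI impI, elim conjE)
  fix k k' :: nat and m'
  assume kk: "k' \<le> k" and mk: "marking C m'"
    and r: "reach C (repeat_mset k (mset_set (inp C))) (m' + repeat_mset k' (mset_set (outp C)))"
  obtain j l where jl: "l \<le> j"
    "reach N (repeat_mset k (mset_set (inp N))) (prN (m' + repeat_mset k' (mset_set (outp C))) + replicate_mset (j - l) p)"
    "reach M (repeat_mset j (mset_set (inp M))) (prM (m' + repeat_mset k' (mset_set (outp C))) + repeat_mset l (mset_set (outp M)))"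
    using inv[OF r] by blast
  define E where "E = (if p \<in> outp N then k' else 0)"
  have d: "(outp N - {p}) \<inter> outp M = {}" using oN oM disPP by blast
  have oC: "mset_set (outp C) = mset_set (outp N - {p}) + (if p \<in> outp N then mset_set (outp M) else {#})"
    using mset_set_Union[OF _ finO d] finON unfolding place_subst_def by auto
  have a1: "prN (mset_set (outp C)) = mset_set (outp N - {p})" "prM (mset_set (outp C)) = (if p \<in> outp N then mset_set (outp M) else {#})"
    unfolding oC using prN_A[OF oN] prM_A[OF oN] prN_M[OF oM] prM_M[OF oM] by (auto simp: prN_plus prM_plus prN_def prM_def)
  have a2: "prN (repeat_mset k' (mset_set (outp C))) = repeat_mset k' (prN (mset_set (outp C)))"
    "prM (repeat_mset k' (mset_set (outp C))) = repeat_mset k' (prM (mset_set (outp C)))"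
    unfolding prN_def prM_def by (simp_all only: filter_repeat)
  have pM: "prM (m' + repeat_mset k' (mset_set (outp C))) = prM m' + repeat_mset E (mset_set (outp M))"
    unfolding prM_plus a2 a1 E_def by auto
  have pN: "prN (m' + repeat_mset k' (mset_set (outp C))) = prN m' + repeat_mset k' (mset_set (outp N - {p}))"
    unfolding prN_plus a2 a1 by auto
  have mM: "marking M (prM m')" unfolding marking_def prM_def by auto
  have rM: "reach M (repeat_mset j (mset_set (inp M))) (prM m' + repeat_mset (l + E) (mset_set (outp M)))"
    using jl(3) unfolding pM by (simp add: repeat_mset_distrib add.assoc add.commute add.left_commute)
  have lE: "l + E \<le> j" using boundM[OF mM rM] .
  define c where "c = j - l - E"
  have rM2: "reach M (prM m') (repeat_mset c (mset_set (outp M)))"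
    using sM mM rM lE unfolding sub_sound_def c_def by (metis diff_diff_left)
  have pNm: "set_mset (prN m') \<subseteq> places N" and np: "p \<notin># prN m'"
    using mk pP disPP unfolding marking_def prN_def place_subst_def by auto
  have mN: "marking N (prN m' + replicate_mset c p)" using pNm pP unfolding marking_def by auto
  have "prN (m' + repeat_mset k' (mset_set (outp C))) + replicate_mset (j - l) p
     = (prN m' + replicate_mset c p) + repeat_mset k' (mset_set (outp N))"
    unfolding pN c_def E_def using lE
    by (subst splitp[OF finON]) (auto simp: multiset_eq_iff E_def count_mset_set)
  then have rN: "reach N (prN m' + replicate_mset c p) (repeat_mset (k - k') (mset_set (outp N)))"
    using sN mN jl(2) kk unfolding sub_sound_def by metis
  have l1: "lift (prN m' + replicate_mset c p) = prN m' + repeat_mset c (mset_set (outp M))"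
    by (simp add: lift_plus lift_nop[OF np] lift_p)
  have l2: "lift (repeat_mset (k - k') (mset_set (outp N))) = repeat_mset (k - k') (mset_set (outp C))"
    unfolding lift_repeat oC by (subst splitp[OF finON]) (simp add: lift_plus lift_nop[OF nop_S] lift_single)
  have "reach C m' (prN m' + repeat_mset c (mset_set (outp M)))"
    using reachM_C[OF reach_frame[OF rM2, of "prN m'"]]
    by (metis add.commute multiset_partition prN_def prM_def)
  then show "reach C m' (repeat_mset (k - k') (mset_set (outp C)))"
    using reachN_lift[OF rN] unfolding l1 l2 by (rule reach_trans)
qed

end

theorem mainTheorem8:
  fixes N M :: "'a pnet" and p :: 'a
  assumes "pWF_net N" and "pWF_net M"
    and "nodes N \<inter> nodes M = {}"
    and "sub_sound N" and "sub_sound M"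
    and "p \<in> places N"
  shows "sub_sound (place_subst N p M)"
proof -
  interpret sctx N M p using assms by unfold_locales
  show ?thesis using main assms(4) .
qed

end
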